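(* For every $n\in\mathbb{N}$, the number of labeled split graphs with vertex set $[n]$ whose questioning set has size at least $2$ equals $$2\sum_{q=2}^{n}\sum_{c=0}^{n-q}\binom{n}{q}\binom{n-q}{c}\big(2^{\,n-c-q}-1\big)^{c},$$ with the convention $0^0=1$.
   Context: $[n]=\{1,\dots,n\}$; labeled graphs on $[n]$ are distinct if their edge sets differ. A split partition of a graph $G$ is an ordered pair $(C',I')$ of disjoint sets (possibly empty) with $C'\cup I'=V(G)$, $C'$ a clique and $I'$ an independent set; $G$ is a split graph if it has a split partition. The questioning set of a split graph is the set of vertices $v$ for which there is a split partition with $v\in C'$ and a split partition with $v\in I'$. *)

theory Defs
  imports Main
begin

text \<open>Labeled simple graphs on vertex set [n] = {1..n}, represented by their edge sets
  (sets of 2-element subsets of {1..n}).\<close>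

definition all_edges :: "nat \<Rightarrow> nat set set" where
  "all_edges n = {e. \<exists>u v. e = {u, v} \<and> u \<noteq> v \<and> u \<in> {1..n} \<and> v \<in> {1..n}}"

definition is_clique :: "nat set set \<Rightarrow> nat set \<Rightarrow> bool" where
  "is_clique E C \<longleftrightarrow> (\<forall>u\<in>C. \<forall>v\<in>C. u \<noteq> v \<longrightarrow> {u, v} \<in> E)"

definition is_indep :: "nat set set \<Rightarrow> nat set \<Rightarrow> bool" where
  "is_indep E I \<longleftrightarrow> (\<forall>u\<in>I. \<forall>v\<in>I. {u, v} \<notin> E)"

definition split_partition :: "nat \<Rightarrow> nat set set \<Rightarrow> nat set \<Rightarrow> nat set \<Rightarrow> bool" where
  "split_partition n E C I \<longleftrightarrow>
     C \<inter> I = {} \<and> C \<union> I = {1..n} \<and> is_clique E C \<and> is_indep E I"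

definition is_split_graph :: "nat \<Rightarrow> nat set set \<Rightarrow> bool" where
  "is_split_graph n E \<longleftrightarrow> (\<exists>C I. split_partition n E C I)"

definition questioning_set :: "nat \<Rightarrow> nat set set \<Rightarrow> nat set" where
  "questioning_set n E =
     {v. (\<exists>C I. split_partition n E C I \<and> v \<in> C) \<and> (\<exists>C I. split_partition n E C I \<and> v \<in> I)}"

end

theory Submission
  imports Defs "HOL-Library.FuncSet"
begin

lemma ae_sing: "{u} \<notin> all_edges n"
  unfolding all_edges_def by (auto simp: doubleton_eq_iff)

lemma ae_pair: "{u,v} \<in> all_edges n \<longleftrightarrow> u \<noteq> v \<and> u \<in> {1..n} \<and> v \<in> {1..n}"
  unfolding all_edges_def by (auto simp: doubleton_eq_iff)

lemma ae_finite: "finite (all_edges n)"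
proof -
  have "all_edges n \<subseteq> Pow {1..n}" unfolding all_edges_def by auto
  thus ?thesis by (rule finite_subset) auto
qed

lemma sp_sub: "split_partition n E C I \<Longrightarrow> C \<subseteq> {1..n} \<and> I \<subseteq> {1..n}"
  unfolding split_partition_def by auto

lemma sp_C: "split_partition n E C I \<Longrightarrow> v \<in> {1..n} \<Longrightarrow> v \<notin> I \<Longrightarrow> v \<in> C"
  unfolding split_partition_def by auto
lemma sp_I: "split_partition n E C I \<Longrightarrow> v \<in> {1..n} \<Longrightarrow> v \<notin> C \<Longrightarrow> v \<in> I"
  unfolding split_partition_def by auto
lemma sp_disj: "split_partition n E C I \<Longrightarrow> v \<in> C \<Longrightarrow> v \<notin> I"
  unfolding split_partition_def by auto
lemma sp_n: "split_partition n E C I \<Longrightarrow> v \<in> C \<or> v \<in> I \<Longrightarrow> v \<in> {1..n}"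
  unfolding split_partition_def by auto
lemma sp_cl: "split_partition n E C I \<Longrightarrow> u \<in> C \<Longrightarrow> v \<in> C \<Longrightarrow> u \<noteq> v \<Longrightarrow> {u,v} \<in> E"
  unfolding split_partition_def is_clique_def by auto
lemma sp_ind: "split_partition n E C I \<Longrightarrow> u \<in> I \<Longrightarrow> v \<in> I \<Longrightarrow> {u,v} \<notin> E"
  unfolding split_partition_def is_indep_def by auto

lemma sp_inter:
  assumes "split_partition n E C I" "split_partition n E C' I'"
    "x \<in> C" "x \<in> I'" "z \<in> C" "z \<in> I'"
  shows "x = z"
  using assms sp_cl sp_ind by metis

lemma qs_iff: "v \<in> questioning_set n E \<longleftrightarrow>
   (\<exists>C I. split_partition n E C I \<and> v \<in> C) \<and> (\<exists>C I. split_partition n E C I \<and> v \<in> I)"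
  unfolding questioning_set_def by simp

lemma qs_sub: "questioning_set n E \<subseteq> {1..n}"
  unfolding questioning_set_def split_partition_def by auto

lemma max_exists:
  assumes "is_split_graph n E"
  shows "\<exists>C I. split_partition n E C I \<and> (\<forall>C' I'. split_partition n E C' I' \<longrightarrow> card C' \<le> card C)"
proof -
  let ?Cs = "{C. \<exists>I. split_partition n E C I}"
  have fin: "finite ?Cs"
    by (rule finite_subset[of _ "Pow {1..n}"]) (use sp_sub in blast)+
  have ne: "?Cs \<noteq> {}" using assms unfolding is_split_graph_def by auto
  have "Max (card ` ?Cs) \<in> card ` ?Cs" using fin ne by (intro Max_in) auto
  then obtain C where C: "Max (card ` ?Cs) = card C" "C \<in> ?Cs" by (rule imageE)
  then obtain I where "split_partition n E C I" using C(2) by auto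
  moreover have "\<forall>C' I'. split_partition n E C' I' \<longrightarrow> card C' \<le> card C"
  proof (intro allI impI)
    fix C' I' assume "split_partition n E C' I'"
    hence "card C' \<in> card ` ?Cs" by blast
    hence "card C' \<le> Max (card ` ?Cs)" using fin by (intro Max_ge) auto
    thus "card C' \<le> card C" using C(1) by simp
  qed
  ultimately show ?thesis by blast
qed

lemma partner:
  assumes sp: "split_partition n E C I" and mx: "\<forall>C' I'. split_partition n E C' I' \<longrightarrow> card C' \<le> card C"
    and sp': "split_partition n E C' I'" and yI: "y \<in> I" and yC': "y \<in> C'"
  shows "\<exists>x. x \<in> C \<and> x \<in> I' \<and> (\<forall>z\<in>C. z \<noteq> x \<longrightarrow> {y,z} \<in> E) \<and> {y,x} \<notin> E"
proof -
  have fC': "finite C'" using sp_sub[OF sp'] finite_subset by blast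
  have yC: "y \<notin> C" using sp_disj[OF sp] yI by blast
  obtain x where x: "x \<in> C" "x \<notin> C'"
  proof (rule ccontr)
    assume "\<not> thesis"
    with that have "C \<subseteq> C'" by blast
    hence "C \<subset> C'" using yC yC' by blast
    hence "card C < card C'" using fC' psubset_card_mono by blast
    with mx sp' show False by force
  qed
  have xI': "x \<in> I'" using sp_I[OF sp' sp_n[OF sp] x(2)] x(1) by blast
  have adj: "\<forall>z\<in>C. z \<noteq> x \<longrightarrow> {y,z} \<in> E"
  proof (intro ballI impI)
    fix z assume z: "z \<in> C" "z \<noteq> x"
    have "z \<notin> I'" using sp_inter[OF sp sp' x(1) xI' z(1)] z(2) by blast
    hence "z \<in> C'" using sp_C[OF sp' sp_n[OF sp]] z(1) by blast
    moreover have "y \<noteq> z" using yC z by blast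
    ultimately show "{y,z} \<in> E" using sp_cl[OF sp' yC'] by blast
  qed
  have nadj: "{y,x} \<notin> E"
  proof
    assume yx: "{y,x} \<in> E"
    have "split_partition n E (insert y C) (I - {y})"
      unfolding split_partition_def
    proof (intro conjI)
      show "insert y C \<inter> (I - {y}) = {}" using sp unfolding split_partition_def by auto
      show "insert y C \<union> (I - {y}) = {1..n}" using sp yI unfolding split_partition_def by auto
      show "is_indep E (I - {y})" using sp unfolding split_partition_def is_indep_def by auto
      show "is_clique E (insert y C)"
        unfolding is_clique_def
      proof (intro ballI impI)
        fix u v assume u: "u \<in> insert y C" and v: "v \<in> insert y C" and uv: "u \<noteq> v"
        show "{u,v} \<in> E"
        proof (cases "u = y")
          case True
          then have "v \<in> C" using v uv by auto
          then show ?thesis using True adj yx by (cases "v = x") auto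
        next
          case False
          then have uC: "u \<in> C" using u by auto
          show ?thesis
          proof (cases "v = y")
            case True
            have "{y,u} \<in> E" using uC adj yx by (cases "u = x") auto
            then show ?thesis using True by (simp add: insert_commute)
          next
            case False
            then have "v \<in> C" using v by auto
            then show ?thesis using sp_cl[OF sp uC] uv by blast
          qed
        qed
      qed
    qed
    moreover have "card (insert y C) = card C + 1"
      using yC sp_sub[OF sp] finite_subset by (metis card_insert_disjoint finite_atLeastAtMost Suc_eq_plus1)
    ultimately show False using mx by force
  qed
  show ?thesis using x(1) xI' adj nadj by blast
qed

definition struct :: "nat \<Rightarrow> nat set set \<Rightarrow> nat set \<Rightarrow> nat set \<Rightarrow> bool" where
  "struct n E Q K \<longleftrightarrow> E \<subseteq> all_edges n \<and> Q \<subseteq> {1..n} \<and> K \<subseteq> {1..n} \<and> Q \<inter> K = {} \<and> 2 \<le> card Q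
     \<and> is_clique E (Q \<union> K) \<and> is_indep E ({1..n} - Q - K)
     \<and> (\<forall>x\<in>Q. \<forall>z\<in>{1..n} - Q - K. {x,z} \<notin> E) \<and> (\<forall>a\<in>K. \<exists>z\<in>{1..n} - Q - K. {a,z} \<in> E)"

lemma st_E: "struct n E Q K \<Longrightarrow> E \<subseteq> all_edges n" unfolding struct_def by blast
lemma st_Q: "struct n E Q K \<Longrightarrow> Q \<subseteq> {1..n}" unfolding struct_def by blast
lemma st_K: "struct n E Q K \<Longrightarrow> K \<subseteq> {1..n}" unfolding struct_def by blast
lemma st_QK: "struct n E Q K \<Longrightarrow> Q \<inter> K = {}" unfolding struct_def by blast
lemma st_card: "struct n E Q K \<Longrightarrow> 2 \<le> card Q" unfolding struct_def by blast
lemma st_cl: "struct n E Q K \<Longrightarrow> u \<in> Q \<union> K \<Longrightarrow> v \<in> Q \<union> K \<Longrightarrow> u \<noteq> v \<Longrightarrow> {u,v} \<in> E"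
  unfolding struct_def is_clique_def by blast
lemma st_ind: "struct n E Q K \<Longrightarrow> u \<in> {1..n} - Q - K \<Longrightarrow> v \<in> {1..n} - Q - K \<Longrightarrow> {u,v} \<notin> E"
  unfolding struct_def is_indep_def by blast
lemma st_QI: "struct n E Q K \<Longrightarrow> x \<in> Q \<Longrightarrow> z \<in> {1..n} - Q - K \<Longrightarrow> {x,z} \<notin> E"
  unfolding struct_def by blast
lemma st_Kn: "struct n E Q K \<Longrightarrow> a \<in> K \<Longrightarrow> \<exists>z\<in>{1..n} - Q - K. {a,z} \<in> E"
  unfolding struct_def by blast

lemma two_elems:
  assumes "2 \<le> card (Q::nat set)"
  obtains u v where "u \<in> Q" "v \<in> Q" "u \<noteq> v"
proof -
  have fin: "finite Q" using assms card.infinite by force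
  have "\<not> card Q \<le> Suc 0" using assms by simp
  then have "\<exists>u\<in>Q. \<exists>v\<in>Q. u \<noteq> v" using card_le_Suc0_iff_eq[OF fin] by blast
  thus ?thesis using that by blast
qed

lemma indep_insert:
  assumes sp: "split_partition n E C I" and Eal: "E \<subseteq> all_edges n"
    and na: "\<forall>z\<in>I. {a,z} \<notin> E"
  shows "is_indep E (insert a I)"
  unfolding is_indep_def
proof (intro ballI)
  fix u v assume u: "u \<in> insert a I" and v: "v \<in> insert a I"
  show "{u,v} \<notin> E"
  proof (cases "u = a")
    case True
    then show ?thesis using v na Eal ae_sing by (cases "v = a") auto
  next
    case False
    then have uI: "u \<in> I" using u by auto
    show ?thesis
    proof (cases "v = a")
      case True
      then show ?thesis using na uI by (metis insert_commute)
    next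
      case False
      then show ?thesis using v uI sp_ind[OF sp] by blast
    qed
  qed
qed

lemma clique_struct:
  assumes Eal: "E \<subseteq> all_edges n" and spg: "is_split_graph n E"
    and c2: "2 \<le> card (questioning_set n E)" and cl: "is_clique E (questioning_set n E)"
  shows "\<exists>K. struct n E (questioning_set n E) K"
proof -
  define Q where "Q = questioning_set n E"
  obtain C I where sp: "split_partition n E C I"
    and mx: "\<forall>C' I'. split_partition n E C' I' \<longrightarrow> card C' \<le> card C"
    using max_exists[OF spg] by blast
  have Qd: "v \<in> Q \<longleftrightarrow> (\<exists>C I. split_partition n E C I \<and> v \<in> C) \<and> (\<exists>C I. split_partition n E C I \<and> v \<in> I)" for v
    unfolding Q_def by (rule qs_iff)
  have Qn: "Q \<subseteq> {1..n}" unfolding Q_def by (rule qs_sub)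
  have QI: "Q \<inter> I = {}"
  proof (rule ccontr)
    assume "Q \<inter> I \<noteq> {}"
    then obtain y where yQ: "y \<in> Q" and yI: "y \<in> I" by blast
    obtain C' I' where sp': "split_partition n E C' I'" and yC': "y \<in> C'" using yQ Qd by blast
    obtain x where x: "x \<in> C" "x \<in> I'" "\<forall>z\<in>C. z \<noteq> x \<longrightarrow> {y,z} \<in> E" "{y,x} \<notin> E"
      using partner[OF sp mx sp' yI yC'] by blast
    from c2 obtain u v where uv: "u \<in> Q" "v \<in> Q" "u \<noteq> v" unfolding Q_def by (rule two_elems)
    have "\<exists>w. w \<in> Q \<and> w \<noteq> y" using uv by metis
    then obtain w where w: "w \<in> Q" "w \<noteq> y" by blast
    have clQ: "is_clique E Q" using cl Q_def by simp
    have yw: "{y,w} \<in> E" using clQ w yQ unfolding is_clique_def by metis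
    have "w \<notin> I" using sp_ind[OF sp yI] yw by blast
    hence wC: "w \<in> C" using sp_C[OF sp] w(1) Qn by blast
    have wx: "w \<noteq> x" using yw x(4) by blast
    obtain C'' I'' where sp'': "split_partition n E C'' I''" and wI'': "w \<in> I''" using w(1) Qd by blast
    have "y \<notin> I''" using sp_ind[OF sp'' _ wI''] yw by blast
    hence yC'': "y \<in> C''" using sp_C[OF sp''] yI Qn yQ by blast
    have "x \<notin> I''" using sp_inter[OF sp sp'' x(1) _ wC wI''] wx by blast
    hence xC'': "x \<in> C''" using sp_C[OF sp''] x(1) sp_n[OF sp] by blast
    have "x \<noteq> y" using x(1) sp_disj[OF sp] yI by blast
    hence "{y,x} \<in> E" using sp_cl[OF sp'' yC'' xC''] by blast
    thus False using x(4) by blast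
  qed
  have QC: "Q \<subseteq> C" using QI Qn sp_C[OF sp] by blast
  have I0: "{1..n} - Q - (C - Q) = I" using sp QC unfolding split_partition_def by blast
  have "struct n E Q (C - Q)"
    unfolding struct_def
  proof (intro conjI)
    show "E \<subseteq> all_edges n" by (rule Eal)
    show "Q \<subseteq> {1..n}" by (rule Qn)
    show "C - Q \<subseteq> {1..n}" using sp_sub[OF sp] by blast
    show "Q \<inter> (C - Q) = {}" by blast
    show "2 \<le> card Q" using c2 Q_def by simp
    have "Q \<union> (C - Q) = C" using QC by blast
    thus "is_clique E (Q \<union> (C - Q))" using sp unfolding split_partition_def by simp
    show "is_indep E ({1..n} - Q - (C - Q))" using I0 sp unfolding split_partition_def by simp
    show "\<forall>x\<in>Q. \<forall>z\<in>{1..n} - Q - (C - Q). {x, z} \<notin> E"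
    proof (intro ballI notI)
      fix x z assume xQ: "x \<in> Q" and z: "z \<in> {1..n} - Q - (C - Q)" and xz: "{x,z} \<in> E"
      have zI: "z \<in> I" using z I0 by blast
      obtain C' I' where sp': "split_partition n E C' I'" and xI': "x \<in> I'" using xQ Qd by blast
      have "z \<notin> I'" using sp_ind[OF sp' xI'] xz by blast
      hence "z \<in> C'" using sp_C[OF sp'] z by blast
      hence "z \<in> Q" using Qd sp sp' zI by blast
      thus False using zI QI by blast
    qed
    show "\<forall>a\<in>C - Q. \<exists>z\<in>{1..n} - Q - (C - Q). {a, z} \<in> E"
    proof (rule ballI, rule ccontr)
      fix a assume aC: "a \<in> C - Q" and na: "\<not> (\<exists>z\<in>{1..n} - Q - (C - Q). {a, z} \<in> E)"
      hence na': "\<forall>z\<in>I. {a,z} \<notin> E" using I0 by simp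
      have "split_partition n E (C - {a}) (insert a I)"
        unfolding split_partition_def
      proof (intro conjI)
        show "(C - {a}) \<inter> insert a I = {}" using sp unfolding split_partition_def by auto
        show "(C - {a}) \<union> insert a I = {1..n}" using sp aC unfolding split_partition_def by auto
        show "is_clique E (C - {a})" using sp unfolding split_partition_def is_clique_def by auto
        show "is_indep E (insert a I)" by (rule indep_insert[OF sp Eal na'])
      qed
      hence "a \<in> Q" using Qd sp aC by blast
      thus False using aC by blast
    qed
  qed
  thus ?thesis unfolding Q_def by blast
qed

lemma dichotomy:
  assumes Eal: "E \<subseteq> all_edges n" and spg: "is_split_graph n E"
  shows "is_clique E (questioning_set n E) \<or> is_indep E (questioning_set n E)"
proof -
  define Q where "Q = questioning_set n E"
  obtain C I where sp: "split_partition n E C I"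
    and mx: "\<forall>C' I'. split_partition n E C' I' \<longrightarrow> card C' \<le> card C"
    using max_exists[OF spg] by blast
  have Qd: "v \<in> Q \<longleftrightarrow> (\<exists>C I. split_partition n E C I \<and> v \<in> C) \<and> (\<exists>C I. split_partition n E C I \<and> v \<in> I)" for v
    unfolding Q_def by (rule qs_iff)
  have Qn: "Q \<subseteq> {1..n}" unfolding Q_def by (rule qs_sub)
  have QCI: "v \<in> C \<or> v \<in> I" if "v \<in> Q" for v using sp_C[OF sp] Qn that by blast
  show ?thesis
  proof (cases "Q \<inter> I = {}")
    case True
    hence QC: "Q \<subseteq> C" using QCI by blast
    have "is_clique E Q" unfolding is_clique_def
    proof (intro ballI impI)
      fix u v assume "u \<in> Q" "v \<in> Q" "u \<noteq> v"
      thus "{u,v} \<in> E" using sp_cl[OF sp] QC by (metis subsetD)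
    qed
    thus ?thesis unfolding Q_def by blast
  next
    case False
    then obtain y where yQ: "y \<in> Q" and yI: "y \<in> I" by blast
    obtain C' I' where sp': "split_partition n E C' I'" and yC': "y \<in> C'" using yQ Qd by blast
    obtain x where x: "x \<in> C" "x \<in> I'" "\<forall>z\<in>C. z \<noteq> x \<longrightarrow> {y,z} \<in> E" "{y,x} \<notin> E"
      using partner[OF sp mx sp' yI yC'] by blast
    have c1: "w = x" if wQ: "w \<in> Q" and wC: "w \<in> C" for w
    proof (rule ccontr)
      assume wx: "w \<noteq> x"
      have yw: "{y,w} \<in> E" using x(3) wC wx by metis
      obtain C'' I'' where sp'': "split_partition n E C'' I''" and wI'': "w \<in> I''" using wQ Qd by blast
      have "y \<notin> I''" using sp_ind[OF sp'' _ wI''] yw by metis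
      hence yC'': "y \<in> C''" using sp_C[OF sp''] yI sp_n[OF sp] by blast
      have "x \<notin> I''" using sp_inter[OF sp sp'' x(1) _ wC wI''] wx by blast
      hence xC'': "x \<in> C''" using sp_C[OF sp''] x(1) sp_n[OF sp] by blast
      have "x \<noteq> y" using x(1) sp_disj[OF sp] yI by blast
      hence "{y,x} \<in> E" using sp_cl[OF sp'' yC'' xC''] by metis
      thus False using x(4) by metis
    qed
    have c2: "{y',x} \<notin> E" if y'I: "y' \<in> I" for y'
    proof (cases "y' = y")
      case True thus ?thesis using x(4) by simp
    next
      case False
      have "y' \<notin> C'" using sp_inter[OF sp' sp yC' yI _ y'I] False by blast
      hence "y' \<in> I'" using sp_I[OF sp'] y'I sp_n[OF sp] by blast
      thus ?thesis using sp_ind[OF sp' _ x(2)] by metis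
    qed
    have "is_indep E Q"
      unfolding is_indep_def
    proof (intro ballI)
      fix u v assume u: "u \<in> Q" and v: "v \<in> Q"
      show "{u,v} \<notin> E"
      proof (cases "u \<in> C")
        case True
        hence ux: "u = x" using c1 u by blast
        show ?thesis
        proof (cases "v \<in> C")
          case True
          hence "v = x" using c1 v by blast
          thus ?thesis using ux Eal ae_sing by (metis insert_absorb2 subsetD)
        next
          case False
          hence "v \<in> I" using v QCI by blast
          thus ?thesis using c2 ux by (metis insert_commute)
        qed
      next
        case False
        hence uI: "u \<in> I" using u QCI by blast
        show ?thesis
        proof (cases "v \<in> C")
          case True
          hence "v = x" using c1 v by blast
          thus ?thesis using c2 uI by metis
        next
          case False
          hence "v \<in> I" using v QCI by blast
          thus ?thesis using uI sp_ind[OF sp] by metis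
        qed
      qed
    qed
    thus ?thesis unfolding Q_def by blast
  qed
qed

lemma struct_sp:
  assumes "struct n E Q K"
  shows "split_partition n E (Q \<union> K) ({1..n} - Q - K)"
  using assms unfolding struct_def split_partition_def by auto

lemma struct_qs:
  assumes st: "struct n E Q K"
  shows "questioning_set n E = Q"
proof
  have Eal: "E \<subseteq> all_edges n" using st_E[OF st] .
  show "Q \<subseteq> questioning_set n E"
  proof
    fix x assume xQ: "x \<in> Q"
    have "split_partition n E (Q \<union> K - {x}) (insert x ({1..n} - Q - K))"
      unfolding split_partition_def
    proof (intro conjI)
      show "(Q \<union> K - {x}) \<inter> insert x ({1..n} - Q - K) = {}" by auto
      show "(Q \<union> K - {x}) \<union> insert x ({1..n} - Q - K) = {1..n}" using st_Q[OF st] st_K[OF st] xQ by auto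
      show "is_clique E (Q \<union> K - {x})" unfolding is_clique_def
      proof (intro ballI impI)
        fix u v assume "u \<in> Q \<union> K - {x}" "v \<in> Q \<union> K - {x}" "u \<noteq> v"
        thus "{u,v} \<in> E" using st_cl[OF st] by (metis DiffD1)
      qed
      show "is_indep E (insert x ({1..n} - Q - K))"
        by (rule indep_insert[OF struct_sp[OF st] Eal]) (use st_QI[OF st xQ] in blast)
    qed
    moreover have "split_partition n E (Q \<union> K) ({1..n} - Q - K)" using struct_sp[OF st] .
    ultimately show "x \<in> questioning_set n E" unfolding qs_iff using xQ by blast
  qed
  show "questioning_set n E \<subseteq> Q"
  proof
    fix v assume vq: "v \<in> questioning_set n E"
    obtain C' I' where sp1: "split_partition n E C' I'" and vC': "v \<in> C'"
      using vq unfolding qs_iff by blast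
    obtain C'' I'' where sp2: "split_partition n E C'' I''" and vI'': "v \<in> I''"
      using vq unfolding qs_iff by blast
    have vn: "v \<in> {1..n}" using vq qs_sub by blast
    from st_card[OF st] obtain a b where ab: "a \<in> Q" "b \<in> Q" "a \<noteq> b" by (rule two_elems)
    have an: "a \<in> {1..n}" "b \<in> {1..n}" using ab st_Q[OF st] by blast+
    show "v \<in> Q"
    proof (rule ccontr)
      assume vQ: "v \<notin> Q"
      show False
      proof (cases "v \<in> K")
        case True
        obtain y where y: "y \<in> {1..n} - Q - K" "{v,y} \<in> E" using st_Kn[OF st True] by blast
        have "y \<notin> I''" using sp_ind[OF sp2 vI''] y(2) by metis
        hence yC: "y \<in> C''" using y(1) sp_C[OF sp2] by blast
        have av: "a \<noteq> v" using ab(1) vQ by blast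
        have "{a,v} \<in> E" using st_cl[OF st _ _ av] ab(1) True by blast
        hence "a \<notin> I''" using sp_ind[OF sp2 _ vI''] by metis
        hence aC: "a \<in> C''" using an sp_C[OF sp2] by blast
        have ay: "a \<noteq> y" using ab(1) y(1) by blast
        hence "{a,y} \<in> E" using sp_cl[OF sp2 aC yC] by metis
        thus False using st_QI[OF st ab(1) y(1)] by metis
      next
        case False
        hence vI0: "v \<in> {1..n} - Q - K" using vn vQ by blast
        have nq: "{q,v} \<notin> E" if "q \<in> Q" for q using st_QI[OF st that vI0] .
        have "a \<notin> C'" using sp_cl[OF sp1 _ vC'] nq[OF ab(1)] ab(1) vQ by metis
        hence aI: "a \<in> I'" using an sp_I[OF sp1] by blast
        have "b \<notin> C'" using sp_cl[OF sp1 _ vC'] nq[OF ab(2)] ab(2) vQ by metis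
        hence bI: "b \<in> I'" using an sp_I[OF sp1] by blast
        have "{a,b} \<in> E" using st_cl[OF st _ _ ab(3)] ab(1,2) by blast
        thus False using sp_ind[OF sp1 aI bI] by metis
      qed
    qed
  qed
qed

lemma struct_K:
  assumes st: "struct n E Q K"
  shows "K = {v \<in> {1..n} - Q. \<exists>q\<in>Q. {v,q} \<in> E}"
proof -
  from st_card[OF st] obtain a b where ab: "a \<in> Q" "b \<in> Q" "a \<noteq> b" by (rule two_elems)
  show ?thesis
  proof (intro equalityI subsetI)
    fix v assume vK: "v \<in> K"
    have va: "v \<noteq> a" using vK ab st_QK[OF st] by blast
    hence "{v,a} \<in> E" using st_cl[OF st _ _ va] ab vK by blast
    moreover have "v \<in> {1..n} - Q" using vK st_K[OF st] st_QK[OF st] by blast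
    ultimately show "v \<in> {v \<in> {1..n} - Q. \<exists>q\<in>Q. {v,q} \<in> E}" using ab(1) by blast
  next
    fix v assume v: "v \<in> {v \<in> {1..n} - Q. \<exists>q\<in>Q. {v,q} \<in> E}"
    then obtain q where q: "q \<in> Q" "{v,q} \<in> E" by blast
    show "v \<in> K"
    proof (rule ccontr)
      assume "v \<notin> K"
      hence "v \<in> {1..n} - Q - K" using v by blast
      hence "{q,v} \<notin> E" using st_QI[OF st q(1)] by blast
      thus False using q(2) by (metis insert_commute)
    qed
  qed
qed

lemma compl_cl: "C \<subseteq> {1..n} \<Longrightarrow> E \<subseteq> all_edges n \<Longrightarrow> is_clique (all_edges n - E) C \<longleftrightarrow> is_indep E C"
  unfolding is_clique_def is_indep_def using ae_sing by (auto simp: ae_pair subset_iff)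
lemma compl_ind: "C \<subseteq> {1..n} \<Longrightarrow> E \<subseteq> all_edges n \<Longrightarrow> is_indep (all_edges n - E) C \<longleftrightarrow> is_clique E C"
  unfolding is_clique_def is_indep_def using ae_sing by (auto simp: ae_pair subset_iff)

lemma compl_sp:
  assumes Eal: "E \<subseteq> all_edges n"
  shows "split_partition n (all_edges n - E) C I \<longleftrightarrow> split_partition n E I C"
proof
  assume h: "split_partition n (all_edges n - E) C I"
  hence s: "C \<subseteq> {1..n}" "I \<subseteq> {1..n}" using sp_sub by blast+
  show "split_partition n E I C" using h compl_cl[OF s(1) Eal] compl_ind[OF s(2) Eal]
    unfolding split_partition_def by auto
next
  assume h: "split_partition n E I C"
  hence s: "C \<subseteq> {1..n}" "I \<subseteq> {1..n}" using sp_sub by blast+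
  show "split_partition n (all_edges n - E) C I" using h compl_cl[OF s(1) Eal] compl_ind[OF s(2) Eal]
    unfolding split_partition_def by auto
qed

lemma compl_qs:
  assumes "E \<subseteq> all_edges n"
  shows "questioning_set n (all_edges n - E) = questioning_set n E"
  unfolding questioning_set_def compl_sp[OF assms] by blast

lemma compl_split:
  assumes "E \<subseteq> all_edges n"
  shows "is_split_graph n (all_edges n - E) = is_split_graph n E"
  unfolding is_split_graph_def compl_sp[OF assms] by blast

lemma pair_eqD: "{a,b} = {u,v} \<Longrightarrow> a \<in> {u,v} \<and> b \<in> {u,v}"
  by auto

definition gmap :: "nat set \<Rightarrow> nat set \<Rightarrow> (nat \<Rightarrow> nat set) \<Rightarrow> nat set set" where
  "gmap Q K f = {e. \<exists>u v. e = {u,v} \<and> u \<noteq> v \<and> u \<in> Q \<union> K \<and> v \<in> Q \<union> K}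
     \<union> {e. \<exists>z y. e = {z,y} \<and> z \<in> K \<and> y \<in> f z}"

lemma count_T:
  assumes Qn: "Q \<subseteq> {1..n}" and Q2: "2 \<le> card Q" and Kn: "K \<subseteq> {1..n} - Q"
  shows "card {E. struct n E Q K} = (2 ^ (n - card Q - card K) - 1) ^ card K"
proof -
  define I0 where "I0 = {1..n} - Q - K"
  define T where "T = {E. struct n E Q K}"
  define D where "D = (\<Pi>\<^sub>E z\<in>K. Pow I0 - {{}})"
  define h where "h = (\<lambda>E. \<lambda>z\<in>K. {y \<in> I0. {z,y} \<in> E})"
  have QK: "Q \<inter> K = {}" using Kn by blast
  have KI0: "z \<in> K \<Longrightarrow> z \<notin> I0" for z unfolding I0_def by blast
  have QI0: "z \<in> Q \<Longrightarrow> z \<notin> I0" for z unfolding I0_def by blast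
  have I0n: "I0 \<subseteq> {1..n}" unfolding I0_def by blast
  have fD: "f z \<subseteq> I0" "f z \<noteq> {}" if "f \<in> D" "z \<in> K" for f z
    using that unfolding D_def by auto
  have h1: "h E \<in> D" if "E \<in> T" for E
  proof -
    have st: "struct n E Q K" using that T_def by simp
    have "{y \<in> I0. {z,y} \<in> E} \<in> Pow I0 - {{}}" if "z \<in> K" for z
      using st_Kn[OF st that] unfolding I0_def by blast
    thus ?thesis unfolding h_def D_def by (simp add: restrict_PiE_iff)
  qed
  have h2: "h (gmap Q K f) = f" if f: "f \<in> D" for f
  proof (rule ext)
    fix z
    show "h (gmap Q K f) z = f z"
    proof (cases "z \<in> K")
      case False
      have "f z = undefined" using f False unfolding D_def by (rule PiE_arb)
      thus ?thesis using False unfolding h_def by simp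
    next
      case zK: True
      have "{y \<in> I0. {z,y} \<in> gmap Q K f} = f z"
      proof (intro equalityI subsetI)
        fix y assume y: "y \<in> {y \<in> I0. {z,y} \<in> gmap Q K f}"
        hence yI: "y \<in> I0" by blast
        from y have "{z,y} \<in> gmap Q K f" by blast
        then consider (a) u v where "{z,y} = {u,v}" "u \<in> Q \<union> K" "v \<in> Q \<union> K"
          | (b) z' y' where "{z,y} = {z',y'}" "z' \<in> K" "y' \<in> f z'"
          unfolding gmap_def by blast
        thus "y \<in> f z"
        proof cases
          case a
          hence "y \<in> Q \<union> K" using pair_eqD[OF a(1)] by blast
          thus ?thesis using yI QI0 KI0 by blast
        next
          case b
          have "z' \<in> {z,y}" using pair_eqD[OF b(1)[symmetric]] by blast
          hence zz: "z' = z" using b(2) yI KI0 by blast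
          have "y' \<in> {z,y}" using pair_eqD[OF b(1)[symmetric]] by blast
          moreover have "y' \<noteq> z" using fD[OF f b(2)] b(3) KI0 zK by blast
          ultimately show ?thesis using b(3) zz by blast
        qed
      next
        fix y assume y: "y \<in> f z"
        have "{z,y} \<in> gmap Q K f" unfolding gmap_def using zK y by blast
        thus "y \<in> {y \<in> I0. {z,y} \<in> gmap Q K f}" using fD[OF f zK] y by blast
      qed
      thus ?thesis unfolding h_def using zK by simp
    qed
  qed
  have h3: "gmap Q K f \<in> T" if f: "f \<in> D" for f
  proof -
    let ?G = "gmap Q K f"
    have mem: "e \<in> ?G \<longleftrightarrow> (\<exists>u v. e = {u,v} \<and> u \<noteq> v \<and> u \<in> Q \<union> K \<and> v \<in> Q \<union> K)
        \<or> (\<exists>z y. e = {z,y} \<and> z \<in> K \<and> y \<in> f z)" for e unfolding gmap_def by blast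
    have "struct n ?G Q K"
      unfolding struct_def
    proof (intro conjI)
      show "?G \<subseteq> all_edges n"
      proof
        fix e assume "e \<in> ?G"
        then consider (a) u v where "e = {u,v}" "u \<noteq> v" "u \<in> Q \<union> K" "v \<in> Q \<union> K"
          | (b) z y where "e = {z,y}" "z \<in> K" "y \<in> f z" unfolding gmap_def by blast
        thus "e \<in> all_edges n"
        proof cases
          case a thus ?thesis using Qn Kn by (auto simp: ae_pair)
        next
          case b
          have "y \<in> I0" using fD[OF f b(2)] b(3) by blast
          hence "z \<noteq> y" "y \<in> {1..n}" using KI0[OF b(2)] I0n by blast+
          thus ?thesis using b Kn by (auto simp: ae_pair)
        qed
      qed
      show "Q \<subseteq> {1..n}" by (rule Qn)
      show "K \<subseteq> {1..n}" using Kn by blast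
      show "Q \<inter> K = {}" by (rule QK)
      show "2 \<le> card Q" by (rule Q2)
      show "is_clique ?G (Q \<union> K)" unfolding is_clique_def
      proof (intro ballI impI)
        fix u v assume "u \<in> Q \<union> K" "v \<in> Q \<union> K" "u \<noteq> v"
        thus "{u,v} \<in> ?G" unfolding gmap_def by blast
      qed
      show "is_indep ?G ({1..n} - Q - K)" unfolding is_indep_def
      proof (intro ballI notI)
        fix u v assume u: "u \<in> {1..n} - Q - K" and v: "v \<in> {1..n} - Q - K" and uv: "{u,v} \<in> ?G"
        then consider (a) a b where "{u,v} = {a,b}" "a \<in> Q \<union> K"
          | (b) z y where "{u,v} = {z,y}" "z \<in> K" unfolding gmap_def by blast
        thus False
        proof cases
          case a thus False using pair_eqD[OF a(1)[symmetric]] u v by blast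
        next
          case b thus False using pair_eqD[OF b(1)[symmetric]] u v by blast
        qed
      qed
      show "\<forall>x\<in>Q. \<forall>z\<in>{1..n} - Q - K. {x, z} \<notin> ?G"
      proof (intro ballI notI)
        fix x z assume x: "x \<in> Q" and z: "z \<in> {1..n} - Q - K" and xz: "{x,z} \<in> ?G"
        then consider (a) a b where "{x,z} = {a,b}" "a \<in> Q \<union> K" "b \<in> Q \<union> K"
          | (b) z' y where "{x,z} = {z',y}" "z' \<in> K" unfolding gmap_def by blast
        thus False
        proof cases
          case a thus False using pair_eqD[OF a(1)] z by blast
        next
          case b thus False using pair_eqD[OF b(1)[symmetric]] x z QK by blast
        qed
      qed
      show "\<forall>a\<in>K. \<exists>z\<in>{1..n} - Q - K. {a, z} \<in> ?G"
      proof
        fix a assume aK: "a \<in> K"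
        obtain y where y: "y \<in> f a" using fD(2)[OF f aK] by blast
        have "{a,y} \<in> ?G" unfolding gmap_def using aK y by blast
        moreover have "y \<in> {1..n} - Q - K" using fD(1)[OF f aK] y unfolding I0_def by blast
        ultimately show "\<exists>z\<in>{1..n} - Q - K. {a, z} \<in> ?G" by blast
      qed
    qed
    thus ?thesis unfolding T_def by simp
  qed
  have h4: "gmap Q K (h E) = E" if "E \<in> T" for E
  proof -
    have st: "struct n E Q K" using that T_def by simp
    have Eal: "E \<subseteq> all_edges n" using st_E[OF st] .
    have hz: "h E z = {y \<in> I0. {z,y} \<in> E}" if "z \<in> K" for z unfolding h_def using that by simp
    show ?thesis
    proof (intro equalityI subsetI)
      fix e assume "e \<in> gmap Q K (h E)"
      then consider (a) u v where "e = {u,v}" "u \<noteq> v" "u \<in> Q \<union> K" "v \<in> Q \<union> K"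
        | (b) z y where "e = {z,y}" "z \<in> K" "y \<in> h E z" unfolding gmap_def by blast
      thus "e \<in> E"
      proof cases
        case a thus ?thesis using st_cl[OF st] by blast
      next
        case b thus ?thesis using hz[OF b(2)] by blast
      qed
    next
      fix e assume eE: "e \<in> E"
      then obtain u v where e: "e = {u,v}" "u \<noteq> v" "u \<in> {1..n}" "v \<in> {1..n}"
        using Eal unfolding all_edges_def by blast
      have uvE: "{u,v} \<in> E" "{v,u} \<in> E" using eE e(1) by (auto simp: insert_commute)
      show "e \<in> gmap Q K (h E)"
      proof (cases "u \<in> Q \<union> K \<and> v \<in> Q \<union> K")
        case True
        hence "\<exists>a b. e = {a,b} \<and> a \<noteq> b \<and> a \<in> Q \<union> K \<and> b \<in> Q \<union> K"
          using e(1,2) by (intro exI[of _ u] exI[of _ v]) simp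
        thus ?thesis unfolding gmap_def by (intro UnI1) simp
      next
        case False
        show ?thesis
        proof (cases "u \<in> Q \<union> K")
          case uin: True
          hence vI: "v \<in> I0" using False e(4) unfolding I0_def by blast
          have "u \<notin> Q" using st_QI[OF st _ vI[unfolded I0_def]] uvE(1) by blast
          hence uK: "u \<in> K" using uin by blast
          have "v \<in> h E u" using hz[OF uK] vI uvE(1) by blast
          hence "\<exists>z y. e = {z,y} \<and> z \<in> K \<and> y \<in> h E z"
            using e(1) uK by (intro exI[of _ u] exI[of _ v]) simp
          thus ?thesis unfolding gmap_def by (intro UnI2) simp
        next
          case uout: False
          hence uI: "u \<in> I0" using e(3) unfolding I0_def by blast
          show ?thesis
          proof (cases "v \<in> Q \<union> K")
            case vin: True
            have "v \<notin> Q" using st_QI[OF st _ uI[unfolded I0_def]] uvE(2) by blast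
            hence vK: "v \<in> K" using vin by blast
            have "u \<in> h E v" using hz[OF vK] uI uvE(2) by blast
            moreover have "e = {v,u}" using e(1) by (simp add: insert_commute)
            ultimately have "\<exists>z y. e = {z,y} \<and> z \<in> K \<and> y \<in> h E z"
              using vK by (intro exI[of _ v] exI[of _ u]) simp
            thus ?thesis unfolding gmap_def by (intro UnI2) simp
          next
            case False
            hence vI: "v \<in> I0" using e(4) unfolding I0_def by blast
            have False using st_ind[OF st uI[unfolded I0_def] vI[unfolded I0_def]] uvE(1) by blast
            thus ?thesis ..
          qed
        qed
      qed
    qed
  qed
  have "bij_betw h T D"
    by (rule bij_betw_byWitness[where f'="gmap Q K"]) (use h1 h2 h3 h4 in blast)+
  hence "card T = card D" by (rule bij_betw_same_card)
  also have "card D = (\<Prod>z\<in>K. card (Pow I0 - {{}}))"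
    unfolding D_def by (rule card_PiE) (use Kn finite_subset in blast)
  also have "\<dots> = (2 ^ card I0 - 1) ^ card K"
  proof -
    have "finite I0" using I0n finite_subset by blast
    hence "card (Pow I0 - {{}}) = 2 ^ card I0 - 1" by (simp add: card_Pow)
    thus ?thesis by simp
  qed
  also have "card I0 = n - card Q - card K"
  proof -
    have fQ: "finite Q" "finite K" using Qn Kn finite_subset by blast+
    have "I0 = {1..n} - (Q \<union> K)" unfolding I0_def by blast
    moreover have "Q \<union> K \<subseteq> {1..n}" using Qn Kn by blast
    ultimately have "card I0 = card {1..n} - card (Q \<union> K)"
      using card_Diff_subset[of "Q \<union> K" "{1..n}"] fQ by simp
    also have "card (Q \<union> K) = card Q + card K" using card_Un_disjoint[OF fQ QK] .
    finally show ?thesis by simp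
  qed
  finally show ?thesis unfolding T_def .
qed
lemma sum_pow_card:
  fixes h :: "nat \<Rightarrow> nat"
  assumes fX: "finite X"
  shows "(\<Sum>C\<in>Pow X. h (card C)) = (\<Sum>c=0..card X. (card X choose c) * h c)"
proof -
  have "(\<Sum>C\<in>Pow X. h (card C)) = (\<Sum>c\<in>{0..card X}. \<Sum>C\<in>{C \<in> Pow X. card C = c}. h (card C))"
  proof (rule sum.group[symmetric])
    show "finite (Pow X)" using fX by simp
    show "finite {0..card X}" by simp
    show "card ` Pow X \<subseteq> {0..card X}" using fX by (auto intro: card_mono)
  qed
  also have "\<dots> = (\<Sum>c\<in>{0..card X}. (card X choose c) * h c)"
  proof (rule sum.cong[OF refl])
    fix c assume "c \<in> {0..card X}"
    have "(\<Sum>C\<in>{C \<in> Pow X. card C = c}. h (card C)) = (\<Sum>C\<in>{C \<in> Pow X. card C = c}. h c)"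
      by (rule sum.cong) auto
    also have "\<dots> = card {C \<in> Pow X. card C = c} * h c" by simp
    also have "card {C \<in> Pow X. card C = c} = card X choose c"
    proof -
      have "{C \<in> Pow X. card C = c} = {C. C \<subseteq> X \<and> card C = c}" by auto
      thus ?thesis using n_subsets[OF fX, of c] by simp
    qed
    finally show "(\<Sum>C\<in>{C \<in> Pow X. card C = c}. h (card C)) = (card X choose c) * h c" .
  qed
  finally show ?thesis .
qed

lemma final_sum:
  fixes n :: nat
  defines "F \<equiv> \<lambda>q. (\<Sum>c=0..n-q. ((n-q) choose c) * (2 ^ (n - q - c) - 1) ^ c)"
  shows "(\<Sum>Q\<in>{Q. Q \<subseteq> {1..n} \<and> 2 \<le> card Q}. \<Sum>K\<in>Pow ({1..n} - Q). (2 ^ (n - card Q - card K) - 1) ^ card K)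
    = (\<Sum>q = 2..n. \<Sum>c = 0..n - q. (n choose q) * ((n - q) choose c) * (2 ^ (n - c - q) - 1) ^ c)"
proof -
  have inner: "(\<Sum>K\<in>Pow ({1..n} - Q). (2 ^ (n - card Q - card K) - 1) ^ card K) = F (card Q)"
    if "Q \<subseteq> {1..n}" for Q
  proof -
    have cQ: "card ({1..n} - Q) = n - card Q" using that by (simp add: card_Diff_subset finite_subset)
    show ?thesis
      using sum_pow_card[of "{1..n} - Q" "\<lambda>k. (2 ^ (n - card Q - k) - 1) ^ k"] unfolding F_def cQ by simp
  qed
  have "(\<Sum>Q\<in>{Q. Q \<subseteq> {1..n} \<and> 2 \<le> card Q}. \<Sum>K\<in>Pow ({1..n} - Q). (2 ^ (n - card Q - card K) - 1) ^ card K)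
      = (\<Sum>Q\<in>{Q \<in> Pow {1..n}. 2 \<le> card Q}. F (card Q))"
  proof (rule sum.cong)
    show "{Q. Q \<subseteq> {1..n} \<and> 2 \<le> card Q} = {Q \<in> Pow {1..n}. 2 \<le> card Q}" by auto
    fix Q assume "Q \<in> {Q \<in> Pow {1..n}. 2 \<le> card Q}"
    thus "(\<Sum>K\<in>Pow ({1..n} - Q). (2 ^ (n - card Q - card K) - 1) ^ card K) = F (card Q)"
      by (intro inner) simp
  qed
  also have "\<dots> = (\<Sum>Q\<in>Pow {1..n}. (\<lambda>q. if 2 \<le> q then F q else 0) (card Q))"
    by (rule sum.inter_filter) simp
  also have "\<dots> = (\<Sum>q=0..n. (n choose q) * (if 2 \<le> q then F q else 0))"
    using sum_pow_card[of "{1..n}"] by simp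
  also have "\<dots> = (\<Sum>q\<in>{q \<in> {0..n}. 2 \<le> q}. (n choose q) * F q)"
  proof -
    have "(\<Sum>q=0..n. (n choose q) * (if 2 \<le> q then F q else 0)) = (\<Sum>q=0..n. if 2 \<le> q then (n choose q) * F q else 0)"
      by (rule sum.cong) auto
    also have "\<dots> = (\<Sum>q\<in>{q \<in> {0..n}. 2 \<le> q}. (n choose q) * F q)"
      by (rule sum.inter_filter[symmetric]) simp
    finally show ?thesis .
  qed
  also have "{q \<in> {0..n}. 2 \<le> q} = {2..n}" by auto
  also have "(\<Sum>q\<in>{2..n}. (n choose q) * F q)
      = (\<Sum>q = 2..n. \<Sum>c = 0..n - q. (n choose q) * ((n - q) choose c) * (2 ^ (n - c - q) - 1) ^ c)"
    unfolding F_def by (simp add: sum_distrib_left mult.assoc add.commute)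
  finally show ?thesis .
qed

lemma struct_S:
  assumes st: "struct n E Q K"
  shows "E \<subseteq> all_edges n \<and> is_split_graph n E \<and> 2 \<le> card (questioning_set n E)
     \<and> is_clique E (questioning_set n E)"
proof -
  have q: "questioning_set n E = Q" by (rule struct_qs[OF st])
  have "is_clique E Q" unfolding is_clique_def
  proof (intro ballI impI)
    fix u v assume "u \<in> Q" "v \<in> Q" "u \<noteq> v"
    thus "{u,v} \<in> E" using st_cl[OF st] by blast
  qed
  moreover have "is_split_graph n E" unfolding is_split_graph_def using struct_sp[OF st] by blast
  ultimately show ?thesis using q st_E[OF st] st_card[OF st] by simp
qed

lemma count_cl:
  "card {E. \<exists>Q K. struct n E Q K} = (\<Sum>q = 2..n. \<Sum>c = 0..n - q.
             (n choose q) * ((n - q) choose c) * (2 ^ (n - c - q) - 1) ^ c)"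
proof -
  define QS where "QS = {Q. Q \<subseteq> {1..n} \<and> 2 \<le> card Q}"
  define T where "T = (\<lambda>Q K. {E. struct n E Q K})"
  have finT: "finite (T Q K)" for Q K
  proof (rule finite_subset[of _ "Pow (all_edges n)"])
    show "T Q K \<subseteq> Pow (all_edges n)" unfolding T_def using st_E by blast
    show "finite (Pow (all_edges n))" using ae_finite by simp
  qed
  have U: "{E. \<exists>Q K. struct n E Q K} = (\<Union>Q\<in>QS. \<Union>K\<in>Pow ({1..n} - Q). T Q K)"
  proof (intro equalityI subsetI)
    fix E assume "E \<in> {E. \<exists>Q K. struct n E Q K}"
    then obtain Q K where st: "struct n E Q K" by blast
    have "Q \<in> QS" unfolding QS_def using st_Q[OF st] st_card[OF st] by blast
    moreover have "K \<in> Pow ({1..n} - Q)" using st_K[OF st] st_QK[OF st] by blast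
    ultimately show "E \<in> (\<Union>Q\<in>QS. \<Union>K\<in>Pow ({1..n} - Q). T Q K)" unfolding T_def using st by blast
  next
    fix E assume "E \<in> (\<Union>Q\<in>QS. \<Union>K\<in>Pow ({1..n} - Q). T Q K)"
    thus "E \<in> {E. \<exists>Q K. struct n E Q K}" unfolding T_def by blast
  qed
  have finQS: "finite QS" unfolding QS_def by (rule finite_subset[of _ "Pow {1..n}"]) auto
  have "card (\<Union>Q\<in>QS. \<Union>K\<in>Pow ({1..n} - Q). T Q K) = (\<Sum>Q\<in>QS. card (\<Union>K\<in>Pow ({1..n} - Q). T Q K))"
  proof (rule card_UN_disjoint[OF finQS])
    show "\<forall>Q\<in>QS. finite (\<Union>K\<in>Pow ({1..n} - Q). T Q K)" using finT by simp
    show "\<forall>Q\<in>QS. \<forall>Q'\<in>QS. Q \<noteq> Q' \<longrightarrow> (\<Union>K\<in>Pow ({1..n} - Q). T Q K) \<inter> (\<Union>K\<in>Pow ({1..n} - Q'). T Q' K) = {}"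
    proof (intro ballI impI)
      fix Q Q' :: "nat set" assume "Q \<noteq> Q'"
      moreover have "Q = Q'" if "E \<in> T Q K" "E \<in> T Q' K'" for E K K'
      proof -
        have a: "struct n E Q K" using that(1) unfolding T_def by simp
        have b: "struct n E Q' K'" using that(2) unfolding T_def by simp
        show ?thesis using struct_qs[OF a] struct_qs[OF b] by simp
      qed
      ultimately show "(\<Union>K\<in>Pow ({1..n} - Q). T Q K) \<inter> (\<Union>K\<in>Pow ({1..n} - Q'). T Q' K) = {}" by blast
    qed
  qed
  also have "\<dots> = (\<Sum>Q\<in>QS. \<Sum>K\<in>Pow ({1..n} - Q). card (T Q K))"
  proof (rule sum.cong[OF refl])
    fix Q assume "Q \<in> QS"
    show "card (\<Union>K\<in>Pow ({1..n} - Q). T Q K) = (\<Sum>K\<in>Pow ({1..n} - Q). card (T Q K))"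
    proof (rule card_UN_disjoint)
      show "finite (Pow ({1..n} - Q))" by simp
      show "\<forall>K\<in>Pow ({1..n} - Q). finite (T Q K)" using finT by blast
      show "\<forall>K\<in>Pow ({1..n} - Q). \<forall>K'\<in>Pow ({1..n} - Q). K \<noteq> K' \<longrightarrow> T Q K \<inter> T Q K' = {}"
      proof (intro ballI impI)
        fix K K' :: "nat set" assume "K \<noteq> K'"
        moreover have "K = K'" if "E \<in> T Q K" "E \<in> T Q K'" for E
        proof -
          have a: "struct n E Q K" using that(1) unfolding T_def by simp
          have b: "struct n E Q K'" using that(2) unfolding T_def by simp
          show ?thesis using struct_K[OF a] struct_K[OF b] by simp
        qed
        ultimately show "T Q K \<inter> T Q K' = {}" by blast
      qed
    qed
  qed
  also have "\<dots> = (\<Sum>Q\<in>QS. \<Sum>K\<in>Pow ({1..n} - Q). (2 ^ (n - card Q - card K) - 1) ^ card K)"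
  proof (rule sum.cong[OF refl])
    fix Q assume Q: "Q \<in> QS"
    show "(\<Sum>K\<in>Pow ({1..n} - Q). card (T Q K)) = (\<Sum>K\<in>Pow ({1..n} - Q). (2 ^ (n - card Q - card K) - 1) ^ card K)"
    proof (rule sum.cong[OF refl])
      fix K assume "K \<in> Pow ({1..n} - Q)"
      thus "card (T Q K) = (2 ^ (n - card Q - card K) - 1) ^ card K"
        unfolding T_def using Q unfolding QS_def by (intro count_T) auto
    qed
  qed
  also have "\<dots> = (\<Sum>q = 2..n. \<Sum>c = 0..n - q. (n choose q) * ((n - q) choose c) * (2 ^ (n - c - q) - 1) ^ c)"
    unfolding QS_def by (rule final_sum)
  finally show ?thesis using U by simp
qed

theorem lemma8p6:
  fixes n :: nat
  shows "card {E. E \<subseteq> all_edges n \<and> is_split_graph n E \<and> card (questioning_set n E) \<ge> 2}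
    = 2 * (\<Sum>q = 2..n. \<Sum>c = 0..n - q.
             (n choose q) * ((n - q) choose c) * (2 ^ (n - c - q) - 1) ^ c)"
proof -
  define S where "S = {E. E \<subseteq> all_edges n \<and> is_split_graph n E \<and> card (questioning_set n E) \<ge> 2}"
  define Scl where "Scl = {E \<in> S. is_clique E (questioning_set n E)}"
  define Sin where "Sin = {E \<in> S. is_indep E (questioning_set n E)}"
  define cp where "cp = (\<lambda>E. all_edges n - E)"
  have finS: "finite S"
    by (rule finite_subset[of _ "Pow (all_edges n)"]) (auto simp: S_def ae_finite)
  have SU: "S = Scl \<union> Sin" unfolding Scl_def Sin_def using dichotomy unfolding S_def by blast
  have disj: "Scl \<inter> Sin = {}"
  proof (rule ccontr)
    assume "Scl \<inter> Sin \<noteq> {}"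
    then obtain E where E: "E \<in> Scl" "E \<in> Sin" by blast
    hence c2: "2 \<le> card (questioning_set n E)" unfolding Scl_def S_def by blast
    from c2 obtain u v where uv: "u \<in> questioning_set n E" "v \<in> questioning_set n E" "u \<noteq> v"
      by (rule two_elems)
    have "{u,v} \<in> E" using E(1) uv unfolding Scl_def is_clique_def by blast
    moreover have "{u,v} \<notin> E" using E(2) uv unfolding Sin_def is_indep_def by blast
    ultimately show False by blast
  qed
  have cpS: "cp E \<in> Sin" if "E \<in> Scl" for E
  proof -
    have Eal: "E \<subseteq> all_edges n" using that unfolding Scl_def S_def by blast
    show ?thesis using that compl_qs[OF Eal] compl_split[OF Eal] compl_ind[OF qs_sub Eal]
      unfolding Scl_def Sin_def S_def cp_def by auto
  qed
  have cpS2: "E \<in> cp ` Scl" if "E \<in> Sin" for E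
  proof -
    have Eal: "E \<subseteq> all_edges n" using that unfolding Sin_def S_def by blast
    have "cp (cp E) = E" unfolding cp_def using Eal by blast
    moreover have "cp E \<in> Scl"
      using that compl_qs[OF Eal] compl_split[OF Eal] compl_cl[OF qs_sub Eal]
      unfolding Scl_def Sin_def S_def cp_def by auto
    ultimately show ?thesis by (metis image_eqI)
  qed
  have "Sin = cp ` Scl" using cpS cpS2 by blast
  moreover have "inj_on cp Scl" unfolding inj_on_def cp_def Scl_def S_def by blast
  ultimately have "card Sin = card Scl" by (simp add: card_image)
  moreover have "card S = card Scl + card Sin"
    using SU disj finS by (simp add: card_Un_disjoint)
  moreover have "Scl = {E. \<exists>Q K. struct n E Q K}"
  proof (intro equalityI subsetI)
    fix E assume "E \<in> Scl"
    thus "E \<in> {E. \<exists>Q K. struct n E Q K}" using clique_struct unfolding Scl_def S_def by blast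
  next
    fix E assume "E \<in> {E. \<exists>Q K. struct n E Q K}"
    thus "E \<in> Scl" using struct_S unfolding Scl_def S_def by blast
  qed
  ultimately show ?thesis unfolding S_def[symmetric] using count_cl[of n] by simp
qed

end
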